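(* Let $n,d$ be integers with $2<d<n/2$, $S=\{1,2,\ldots,d\}\subset\mathbb Z_n$, and $\mathbb K$ a field of characteristic $0$. Then \[H_0^{\mathrm{path}}(\vec C_n^S;\mathbb K)\cong\mathbb K,\qquad H_1^{\mathrm{path}}(\vec C_n^S;\mathbb K)\cong\mathbb K,\qquad H_m^{\mathrm{path}}(\vec C_n^S;\mathbb K)=0\ \ (m\ge2).\]
   Context: GLMY path complex over a field $\mathbb K$ of characteristic $0$: elementary paths $e_{v_0\cdots v_n}$, boundary $\partial e_{v_0\cdots v_n}=\sum_{j}(-1)^j e_{v_0\cdots\widehat{v_j}\cdots v_n}$, paths with two equal consecutive vertices set to $0$; $A_n(G)$ = span of paths along arrows of $G$; $\Omega_0=A_0$, $\Omega_1=A_1$, $\Omega_n=\{u\in A_n:\partial u\in A_{n-1}\}$; $H^{\mathrm{path}}_m$ is the homology of $(\Omega_*,\partial)$. The circulant digraph $\vec{C}_n^S$ has vertex set $\mathbb Z_n$ and an arrow $a\to a+s$ for each $a\in\mathbb Z_n$, $s\in S$. *)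

theory Defs
  imports Main
begin

text \<open>GLMY path homology of a digraph with finite vertex set V and arrow relation E,
  with coefficients in a field 'k. Chains are functions from vertex lists (elementary
  paths) to 'k.\<close>

definition regular_path :: "'v list \<Rightarrow> bool" where
  "regular_path w \<longleftrightarrow> (\<forall>i. Suc i < length w \<longrightarrow> w ! i \<noteq> w ! Suc i)"

definition delete_at :: "nat \<Rightarrow> 'v list \<Rightarrow> 'v list" where
  "delete_at j u = take j u @ drop (Suc j) u"

text \<open>Boundary: coefficient of the regular path w in the boundary of c
  (non-regular faces are set to 0; the boundary of a 0-path is 0).\<close>
definition path_bd :: "'v set \<Rightarrow> ('v list \<Rightarrow> 'k::comm_ring_1) \<Rightarrow> 'v list \<Rightarrow> 'k" where
  "path_bd V c w =
     (if regular_path w \<and> w \<noteq> [] then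
        (\<Sum>u\<in>{u. length u = Suc (length w) \<and> set u \<subseteq> V}.
            c u * (\<Sum>j<length u. if delete_at j u = w then (-1) ^ j else 0))
      else 0)"

definition allowed_paths :: "'v set \<Rightarrow> ('v \<Rightarrow> 'v \<Rightarrow> bool) \<Rightarrow> nat \<Rightarrow> 'v list set" where
  "allowed_paths V E p = {w. length w = Suc p \<and> set w \<subseteq> V \<and>
       (\<forall>i. Suc i < length w \<longrightarrow> E (w ! i) (w ! Suc i))}"

definition A_space :: "'k itself \<Rightarrow> 'v set \<Rightarrow> ('v \<Rightarrow> 'v \<Rightarrow> bool) \<Rightarrow> nat \<Rightarrow> ('v list \<Rightarrow> 'k::comm_ring_1) set" where
  "A_space K V E p = {c. \<forall>w. c w \<noteq> 0 \<longrightarrow> w \<in> allowed_paths V E p}"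

definition Omega_space :: "'k itself \<Rightarrow> 'v set \<Rightarrow> ('v \<Rightarrow> 'v \<Rightarrow> bool) \<Rightarrow> nat \<Rightarrow> ('v list \<Rightarrow> 'k::comm_ring_1) set" where
  "Omega_space K V E p = {c \<in> A_space K V E p. p = 0 \<or> path_bd V c \<in> A_space K V E (p - 1)}"

definition path_cycles :: "'k itself \<Rightarrow> 'v set \<Rightarrow> ('v \<Rightarrow> 'v \<Rightarrow> bool) \<Rightarrow> nat \<Rightarrow> ('v list \<Rightarrow> 'k::comm_ring_1) set" where
  "path_cycles K V E m = {c \<in> Omega_space K V E m. path_bd V c = (\<lambda>_. 0)}"

definition path_boundaries :: "'k itself \<Rightarrow> 'v set \<Rightarrow> ('v \<Rightarrow> 'v \<Rightarrow> bool) \<Rightarrow> nat \<Rightarrow> ('v list \<Rightarrow> 'k::comm_ring_1) set" where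
  "path_boundaries K V E m = path_bd V ` Omega_space K V E (Suc m)"

text \<open>H_m \<cong> K: the quotient Z_m / B_m is spanned by the class of a single cycle z with
  nonzero class, i.e. it is one-dimensional.\<close>
definition path_homology_is_K :: "'k::field itself \<Rightarrow> 'v set \<Rightarrow> ('v \<Rightarrow> 'v \<Rightarrow> bool) \<Rightarrow> nat \<Rightarrow> bool" where
  "path_homology_is_K K V E m \<longleftrightarrow>
     (\<exists>z\<in>path_cycles K V E m. z \<notin> path_boundaries K V E m \<and>
        (\<forall>z'\<in>path_cycles K V E m. \<exists>a. (\<lambda>w. z' w - a * z w) \<in> path_boundaries K V E m))"

definition path_homology_is_zero :: "'k::field itself \<Rightarrow> 'v set \<Rightarrow> ('v \<Rightarrow> 'v \<Rightarrow> bool) \<Rightarrow> nat \<Rightarrow> bool" where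
  "path_homology_is_zero K V E m \<longleftrightarrow> path_cycles K V E m \<subseteq> path_boundaries K V E m"

definition circulant_arrow :: "nat \<Rightarrow> nat set \<Rightarrow> nat \<Rightarrow> nat \<Rightarrow> bool" where
  "circulant_arrow n S a b \<longleftrightarrow> (\<exists>s\<in>S. b = (a + s) mod n)"

end

theory Submission
  imports Defs "HOL-Library.Function_Algebras"
begin

lemma sum_fun_apply: "(sum f A) x = (\<Sum>a\<in>A. f a x)"
  by (induction A rule: infinite_finite_induct) auto

definition ch :: "'v list \<Rightarrow> 'v list \<Rightarrow> 'k::comm_ring_1" where
  "ch u = (\<lambda>w. if w = u then 1 else 0)"

definition E :: "'v list \<Rightarrow> 'v list \<Rightarrow> 'k::comm_ring_1" where
  "E u = (if regular_path u \<and> u \<noteq> [] then ch u else 0)"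

definition sc :: "'k::comm_ring_1 \<Rightarrow> ('v list \<Rightarrow> 'k) \<Rightarrow> 'v list \<Rightarrow> 'k" where
  "sc a f = (\<lambda>w. a * f w)"

definition bdE :: "'v list \<Rightarrow> 'v list \<Rightarrow> 'k::comm_ring_1" where
  "bdE u = (\<Sum>j<length u. sc ((-1)^j) (E (delete_at j u)))"

definition LL :: "'v set \<Rightarrow> nat \<Rightarrow> 'v list set" where
  "LL V l = {u. length u = l \<and> set u \<subseteq> V}"

lemma finite_LL: "finite V \<Longrightarrow> finite (LL V l)"
proof -
  assume "finite V"
  have "LL V l = {xs. set xs \<subseteq> V \<and> length xs = l}" unfolding LL_def by auto
  then show ?thesis using finite_lists_length_eq[OF \<open>finite V\<close>] by simp
qed

lemma delete_at_0[simp]: "delete_at 0 (x#t) = t"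
  by (simp add: delete_at_def)
lemma delete_at_Suc[simp]: "delete_at (Suc j) (x#t) = x # delete_at j t"
  by (simp add: delete_at_def)
lemma length_delete_at: "j < length u \<Longrightarrow> length (delete_at j u) = length u - 1"
  by (simp add: delete_at_def)
lemma set_delete_at: "set (delete_at j u) \<subseteq> set u"
  unfolding delete_at_def by (auto dest: in_set_takeD in_set_dropD)

lemma reg_Nil[simp]: "regular_path []" by (simp add: regular_path_def)
lemma reg_single[simp]: "regular_path [x]" by (simp add: regular_path_def)
lemma adj_Cons2:
  "(\<forall>i. Suc i < length (x#y#t) \<longrightarrow> P ((x#y#t)!i) ((x#y#t)!Suc i)) \<longleftrightarrow>
   P x y \<and> (\<forall>i. Suc i < length (y#t) \<longrightarrow> P ((y#t)!i) ((y#t)!Suc i))"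
proof
  assume H: "\<forall>i. Suc i < length (x#y#t) \<longrightarrow> P ((x#y#t)!i) ((x#y#t)!Suc i)"
  have "P x y" using H[rule_format, of 0] by simp
  moreover have "\<forall>i. Suc i < length (y#t) \<longrightarrow> P ((y#t)!i) ((y#t)!Suc i)"
  proof (intro allI impI)
    fix i assume "Suc i < length (y#t)"
    then show "P ((y#t)!i) ((y#t)!Suc i)" using H[rule_format, of "Suc i"] by simp
  qed
  ultimately show "P x y \<and> (\<forall>i. Suc i < length (y#t) \<longrightarrow> P ((y#t)!i) ((y#t)!Suc i))" by blast
next
  assume H: "P x y \<and> (\<forall>i. Suc i < length (y#t) \<longrightarrow> P ((y#t)!i) ((y#t)!Suc i))"
  show "\<forall>i. Suc i < length (x#y#t) \<longrightarrow> P ((x#y#t)!i) ((x#y#t)!Suc i)"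
  proof (intro allI impI)
    fix i assume "Suc i < length (x#y#t)"
    then show "P ((x#y#t)!i) ((x#y#t)!Suc i)" using H by (cases i) auto
  qed
qed

lemma reg_Cons2[simp]: "regular_path (x#y#t) \<longleftrightarrow> x \<noteq> y \<and> regular_path (y#t)"
  unfolding regular_path_def by (rule adj_Cons2)

lemma ch_apply: "ch u w = (if w = u then 1 else 0)" by (simp add: ch_def)
lemma sc_apply[simp]: "sc a f w = a * f w" by (simp add: sc_def)

lemma path_bd_add: "path_bd V (f + g) = path_bd V f + path_bd V g"
  by (rule ext) (simp add: path_bd_def distrib_right sum.distrib)
lemma path_bd_sc: "path_bd V (sc a f) = sc a (path_bd V f)"
  by (rule ext) (simp add: path_bd_def sum_distrib_left mult.assoc)
lemma path_bd_uminus: "path_bd V (- f) = - path_bd V f"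
  by (rule ext) (simp add: path_bd_def sum_negf)
lemma path_bd_diff: "path_bd V (f - g) = path_bd V f - path_bd V g"
  by (rule ext) (simp add: path_bd_def left_diff_distrib sum_subtractf)
lemma path_bd_zero: "path_bd V 0 = 0"
  by (rule ext) (simp add: path_bd_def)
lemma path_bd_sum: "path_bd V (sum F K) = (\<Sum>k\<in>K. path_bd V (F k))"
proof (induction K rule: infinite_finite_induct)
  case (infinite A) then show ?case by (intro ext) (simp add: path_bd_def)
next
  case empty then show ?case by (intro ext) (simp add: path_bd_def)
next
  case (insert x K) then show ?case by (simp only: sum.insert[OF insert(1) insert(2)] path_bd_add insert(3))
qed

lemma path_bd_ch:
  fixes s :: "'v list"
  assumes "set s \<subseteq> V" and finV: "finite V"
  shows "path_bd V (ch s :: _ \<Rightarrow> 'k::comm_ring_1) = bdE s"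
proof (rule ext)
  fix w :: "'v list"
  have E_app: "E u w = (if regular_path w \<and> w \<noteq> [] then (if u = w then (1::'k) else 0) else 0)" for u
    by (auto simp: E_def ch_def)
  show "path_bd V (ch s) w = (bdE s w :: 'k)"
  proof (cases "regular_path w \<and> w \<noteq> []")
    case False
    then have g: "(regular_path w \<and> w \<noteq> []) = False" by simp
    show ?thesis by (simp only: path_bd_def bdE_def sum_fun_apply sc_apply E_app g if_False) simp
  next
    case True
    show ?thesis
    proof (cases "length s = Suc (length w)")
      case True2: True
      have "path_bd V (ch s) w = (\<Sum>u\<in>{u. length u = Suc (length w) \<and> set u \<subseteq> V}.
            ch s u * (\<Sum>j<length u. if delete_at j u = w then (-1) ^ j else 0))"
        using True by (simp add: path_bd_def)
      also have "\<dots> = (\<Sum>u\<in>{u. length u = Suc (length w) \<and> set u \<subseteq> V}.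
            if s = u then (\<Sum>j<length u. if delete_at j u = w then (-1) ^ j else (0::'k)) else 0)"
        by (intro sum.cong) (auto simp: ch_def)
      also have "\<dots> = (\<Sum>j<length s. if delete_at j s = w then (-1) ^ j else (0::'k))"
        using True2 assms finite_LL[OF finV, of "Suc (length w)"]
        by (subst sum.delta') (auto simp: LL_def)
      also have "\<dots> = bdE s w"
        using True by (auto simp: bdE_def sum_fun_apply E_app intro!: sum.cong)
      finally show ?thesis .
    next
      case False2: False
      have "path_bd V (ch s) w = 0"
        using True False2 by (auto simp: path_bd_def ch_def intro!: sum.neutral)
      moreover have "bdE s w = (0::'k)"
        using False2 by (auto simp: bdE_def sum_fun_apply E_app length_delete_at intro!: sum.neutral)
      ultimately show ?thesis by simp
    qed
  qed
qed

definition gap :: "nat \<Rightarrow> nat \<Rightarrow> nat \<Rightarrow> nat" where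
  "gap n a b = (b + n - a) mod n"

lemma gap_eq: assumes "a < n" shows "(a + gap n a b) mod n = b mod n"
proof -
  have "(a + gap n a b) mod n = (a + (b + (n - a))) mod n"
    using assms by (simp add: gap_def mod_add_right_eq)
  also have "a + (b + (n - a)) = b + n" using assms by simp
  finally show ?thesis by simp
qed

lemma gap_lt: "a < n \<Longrightarrow> gap n a b < n"
  by (simp add: gap_def)

lemma gap_unique: assumes "a < n" "t < n" "(a + t) mod n = c" shows "gap n a c = t"
proof -
  have "gap n a c = ((a + t) mod n + (n - a)) mod n"
    using assms by (simp add: gap_def)
  also have "\<dots> = (a + t + (n - a)) mod n" by (simp add: mod_add_left_eq)
  also have "a + t + (n - a) = t + n" using assms by simp
  finally show ?thesis using assms by simp
qed

lemma gap_pos: assumes "a < n" "b < n" "a \<noteq> b" shows "0 < gap n a b"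
proof (rule ccontr)
  assume "\<not> 0 < gap n a b"
  then have "gap n a b = 0" by simp
  with gap_eq[OF assms(1), of b] assms show False by simp
qed

lemma gap_ne: assumes "a < n" "k < gap n a b" "b < n" shows "(a + k) mod n \<noteq> b"
proof
  assume "(a + k) mod n = b"
  moreover have "k < n" using assms gap_lt[OF assms(1), of b] by simp
  ultimately have "gap n a b = k" using gap_unique[OF assms(1)] by blast
  with assms show False by simp
qed

lemma gap_add: assumes "a < n" "b < n" "c < n" "gap n a b + gap n b c < n"
  shows "gap n a c = gap n a b + gap n b c"
proof (rule gap_unique[OF assms(1) assms(4)])
  have "(a + (gap n a b + gap n b c)) mod n = ((a + gap n a b) mod n + gap n b c) mod n"
    by (simp add: mod_add_left_eq add.assoc)
  also have "\<dots> = (b + gap n b c) mod n" using gap_eq[OF assms(1), of b] assms by simp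
  also have "\<dots> = c mod n" using gap_eq[OF assms(2)] by simp
  finally show "(a + (gap n a b + gap n b c)) mod n = c" using assms by simp
qed

lemma mod_suc_ne: assumes "2 \<le> n" shows "(a + k) mod n \<noteq> (a + Suc k) mod n"
proof -
  define x where "x = (a + k) mod n"
  have e: "(a + Suc k) mod n = Suc x mod n" unfolding x_def by (simp add: mod_Suc_eq)
  have "x < n" using assms unfolding x_def by simp
  show ?thesis
  proof (cases "Suc x < n")
    case True
    then show ?thesis using e unfolding x_def[symmetric] by simp
  next
    case False
    then have "Suc x = n" using \<open>x < n\<close> by simp
    then have "Suc x mod n = 0" by simp
    moreover have "x \<noteq> 0" using \<open>Suc x = n\<close> assms by simp
    ultimately show ?thesis using e unfolding x_def[symmetric] by simp
  qed
qed

lemma allowed_Cons2: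
  "x#y#t \<in> allowed_paths V R (Suc p) \<longleftrightarrow> x \<in> V \<and> R x y \<and> y#t \<in> allowed_paths V R p"
  unfolding allowed_paths_def using adj_Cons2[of x y t R] by auto

lemma allowed_single: "[x] \<in> allowed_paths V R 0 \<longleftrightarrow> x \<in> V"
  unfolding allowed_paths_def by auto

lemma allowed_len: "w \<in> allowed_paths V R p \<Longrightarrow> length w = Suc p \<and> set w \<subseteq> V"
  unfolding allowed_paths_def by auto

lemma circ_arrow: assumes "a < n" "b < n" "d < n"
  shows "circulant_arrow n {1..d} a b \<longleftrightarrow> 1 \<le> gap n a b \<and> gap n a b \<le> d"
proof
  assume "circulant_arrow n {1..d} a b"
  then obtain s where s: "s \<in> {1..d}" "b = (a + s) mod n" unfolding circulant_arrow_def by blast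
  then have "gap n a b = s" using assms by (intro gap_unique) auto
  then show "1 \<le> gap n a b \<and> gap n a b \<le> d" using s by simp
next
  assume H: "1 \<le> gap n a b \<and> gap n a b \<le> d"
  have "b = (a + gap n a b) mod n" using gap_eq[OF assms(1), of b] assms by simp
  then show "circulant_arrow n {1..d} a b" unfolding circulant_arrow_def using H by auto
qed

fun HE :: "nat \<Rightarrow> nat list \<Rightarrow> nat list \<Rightarrow> 'k::comm_ring_1" where
  "HE n (a # b # r) = - (\<Sum>k<gap n a b - 1. ch (((a+k) mod n) # ((a + Suc k) mod n) # b # r))"
| "HE n _ = 0"

definition Qs :: "nat \<Rightarrow> nat \<Rightarrow> nat \<Rightarrow> nat list \<Rightarrow> nat list \<Rightarrow> 'k::comm_ring_1" where
  "Qs n a m t = (\<Sum>k<m. ch (((a+k) mod n) # ((a + Suc k) mod n) # t))"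

lemma HE_Qs: "HE n (a # b # r) = - Qs n a (gap n a b - 1) (b # r)"
  by (simp add: Qs_def)

definition Hop :: "nat \<Rightarrow> (nat list \<Rightarrow> 'k) \<Rightarrow> nat list \<Rightarrow> 'k::comm_ring_1" where
  "Hop n c = (\<lambda>w. \<Sum>u\<in>LL {..<n} (length w - 1). c u * HE n u w)"

lemma Hop_add: "Hop n (f + g) = Hop n f + Hop n g"
  by (rule ext) (simp add: Hop_def distrib_right sum.distrib)
lemma Hop_sc: "Hop n (sc a f) = sc a (Hop n f)"
  by (rule ext) (simp add: Hop_def sum_distrib_left mult.assoc)
lemma Hop_uminus: "Hop n (- f) = - Hop n f"
  by (rule ext) (simp add: Hop_def sum_negf)
lemma Hop_diff: "Hop n (f - g) = Hop n f - Hop n g"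
  by (rule ext) (simp add: Hop_def left_diff_distrib sum_subtractf)
lemma Hop_zero: "Hop n 0 = 0"
  by (rule ext) (simp add: Hop_def)
lemma Hop_sum: "Hop n (sum F K) = (\<Sum>k\<in>K. Hop n (F k))"
proof (induction K rule: infinite_finite_induct)
  case (infinite A) then show ?case by (intro ext) (simp add: Hop_def)
next
  case empty then show ?case by (intro ext) (simp add: Hop_def)
next
  case (insert x K) then show ?case by (simp only: sum.insert[OF insert(1) insert(2)] Hop_add insert(3))
qed

lemma HE_nz:
  assumes "HE n s w \<noteq> (0::'k::comm_ring_1)"
  shows "\<exists>a b r k. s = a # b # r \<and> k < gap n a b - 1 \<and>
           w = ((a+k) mod n) # ((a + Suc k) mod n) # b # r"
proof -
  obtain a b r where s: "s = a # b # r"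
    using assms by (cases "(n, s)" rule: HE.cases) auto
  then have "(\<Sum>k<gap n a b - 1. ch (((a+k) mod n) # ((a + Suc k) mod n) # b # r) w) \<noteq> (0::'k)"
    using assms by (simp add: sum_fun_apply)
  then have "\<exists>k\<in>{..<gap n a b - 1}. ch (((a+k) mod n) # ((a + Suc k) mod n) # b # r) w \<noteq> (0::'k)"
    by (meson sum.neutral)
  then obtain k where "k < gap n a b - 1" "ch (((a+k) mod n) # ((a + Suc k) mod n) # b # r) w \<noteq> (0::'k)"
    by blast
  then show ?thesis using s by (auto simp: ch_def split: if_splits)
qed

lemma Hop_ch:
  fixes s :: "nat list"
  assumes "set s \<subseteq> {..<n}"
  shows "Hop n (ch s) = (HE n s :: nat list \<Rightarrow> 'k::comm_ring_1)"
proof (rule ext)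
  fix w :: "nat list"
  have "Hop n (ch s) w = (\<Sum>u\<in>LL {..<n} (length w - 1). if s = u then (HE n u w :: 'k) else 0)"
    unfolding Hop_def by (intro sum.cong) (auto simp: ch_def)
  also have "\<dots> = (if s \<in> LL {..<n} (length w - 1) then HE n s w else 0)"
    by (rule sum.delta'[OF finite_LL[OF finite_lessThan]])
  also have "\<dots> = HE n s w"
  proof (cases "HE n s w = (0::'k)")
    case True
    then show ?thesis by simp
  next
    case False
    then obtain a b r k where "s = a # b # r" "w = ((a+k) mod n) # ((a + Suc k) mod n) # b # r"
      using HE_nz by blast
    then have "s \<in> LL {..<n} (length w - 1)" using assms by (simp add: LL_def)
    then show ?thesis by simp
  qed
  finally show "Hop n (ch s) w = (HE n s w :: 'k)" .
qed

lemma sc_zero[simp]: "sc 0 f = 0" by (rule ext) simp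
lemma sc_one[simp]: "sc 1 f = f" by (rule ext) simp
lemma sc_neg: "sc (- a) f = - sc a f" by (rule ext) simp
lemma sc_add: "sc a (f + g) = sc a f + sc a g" by (rule ext) (simp add: distrib_left)
lemma sc_add2: "sc (a + b) f = sc a f + sc b f" by (rule ext) (simp add: distrib_right)
lemma sc_diff: "sc a (f - g) = sc a f - sc a g" by (rule ext) (simp add: right_diff_distrib)
lemma sc_uminus: "sc a (- f) = - sc a f" by (rule ext) simp
lemma sc_fzero[simp]: "sc a 0 = 0" by (rule ext) simp
lemma sc_sum: "sc a (sum F K) = (\<Sum>k\<in>K. sc a (F k))"
  by (rule ext) (simp add: sum_fun_apply sum_distrib_left)

lemma E_ch: "regular_path u \<Longrightarrow> u \<noteq> [] \<Longrightarrow> E u = ch u"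
  by (simp add: E_def)
lemma E_nreg: "\<not> regular_path u \<Longrightarrow> E u = 0"
  by (simp add: E_def)

lemma bdE_Cons: "bdE (x # t) = E t - (\<Sum>j<length t. sc ((-1)^j) (E (x # delete_at j t)))"
  unfolding bdE_def length_Cons sum.lessThan_Suc_shift by (simp add: sc_neg sum_negf)

lemma bdE_Cons2: "bdE (x # y # t) = E (y#t) - E (x#t) + (\<Sum>j<length t. sc ((-1)^j) (E (x # y # delete_at j t)))"
  unfolding bdE_Cons[of x] length_Cons sum.lessThan_Suc_shift by (simp add: sc_neg sum_negf)

lemma sum_lessThan_add_split: "(\<Sum>k<(m::nat)+q. f k) = (\<Sum>k<m. f k) + (\<Sum>i<q. f (m+i))"
  by (induction q) (simp_all add: add.assoc)

lemma bdHE: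
  fixes a b :: nat
  assumes "a < n" "b < n" "a \<noteq> b" "regular_path (b#\<rho>)" "set \<rho> \<subseteq> {..<n}"
  shows "path_bd {..<n} (HE n (a#b#\<rho>) :: nat list \<Rightarrow> 'k::comm_ring_1) =
    ch (a#b#\<rho>) - ch (((a + (gap n a b - 1)) mod n) # b # \<rho>)
    - (\<Sum>k<gap n a b - 1. \<Sum>j<length (b#\<rho>).
         sc ((-1)^j) (E (((a+k) mod n) # ((a+Suc k) mod n) # delete_at j (b#\<rho>))))"
proof -
  define s where "s = gap n a b"
  have s0: "0 < s" using gap_pos[OF assms(1-3)] by (simp add: s_def)
  define P where "P k = ((a+k) mod n) # ((a + Suc k) mod n) # b # \<rho>" for k
  define f :: "nat \<Rightarrow> nat list \<Rightarrow> 'k" where "f k = ch (((a+k) mod n) # b # \<rho>)" for k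
  define X :: "nat \<Rightarrow> nat list \<Rightarrow> 'k" where
    "X k = (\<Sum>j<length (b#\<rho>). sc ((-1)^j) (E (((a+k) mod n) # ((a+Suc k) mod n) # delete_at j (b#\<rho>))))" for k
  have n0: "0 < n" using assms by simp
  have "path_bd {..<n} (HE n (a#b#\<rho>) :: nat list \<Rightarrow> 'k) = - (\<Sum>k<s-1. path_bd {..<n} (ch (P k)))"
    by (simp add: s_def P_def path_bd_uminus path_bd_sum)
  also have "\<dots> = - (\<Sum>k<s-1. (f (Suc k) - f k) + X k)"
  proof -
    have "path_bd {..<n} (ch (P k)) = (f (Suc k) - f k) + X k" if k: "k < s - 1" for k
    proof -
      have sP: "set (P k) \<subseteq> {..<n}" using assms n0 by (auto simp: P_def)
      have r1: "(a + Suc k) mod n \<noteq> b" using gap_ne[OF assms(1), of "Suc k" b] k assms(2) by (simp add: s_def)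
      have r2: "(a + k) mod n \<noteq> b" using gap_ne[OF assms(1), of k b] k assms(2) by (simp add: s_def)
      have "path_bd {..<n} (ch (P k)) = (bdE (P k) :: nat list \<Rightarrow> 'k)"
        by (rule path_bd_ch[OF sP finite_lessThan])
      also have "\<dots> = E (((a + Suc k) mod n) # b # \<rho>) - E (((a+k) mod n) # b # \<rho>) + X k"
        by (simp add: P_def bdE_Cons2 X_def)
      also have "\<dots> = (f (Suc k) - f k) + X k"
        using r1 r2 assms(4) by (simp add: E_ch f_def)
      finally show ?thesis .
    qed
    then show ?thesis by simp
  qed
  also have "\<dots> = f 0 - f (s - 1) - (\<Sum>k<s-1. X k)"
    by (simp add: sum.distrib sum_lessThan_telescope)
  also have "f 0 = ch (a#b#\<rho>)" using assms by (simp add: f_def)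
  finally show ?thesis by (simp only: s_def f_def X_def)
qed

lemma comb:
  fixes a b :: nat
  assumes "a < n" "b < n" "a \<noteq> b" "regular_path (b#\<rho>)" "set \<rho> \<subseteq> {..<n}" "2 \<le> n"
  shows "path_bd {..<n} (HE n (a#b#\<rho>)) + Hop n (bdE (a#b#\<rho>)) =
    ch (a#b#\<rho>) - ch (((a + (gap n a b - 1)) mod n) # b # \<rho>) + HE n (b#\<rho>)
    - ((\<Sum>k<gap n a b - 1. E (((a+k) mod n) # ((a+Suc k) mod n) # \<rho>)) + Hop n (E (a#\<rho>)) :: nat list \<Rightarrow> 'k::comm_ring_1)"
proof -
  define s where "s = gap n a b"
  define \<tau> where "\<tau> = b # \<rho>"
  define F :: "nat \<Rightarrow> nat list \<Rightarrow> 'k" where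
    "F j = (\<Sum>k<s-1. E (((a+k) mod n) # ((a+Suc k) mod n) # delete_at j \<tau>))" for j
  define G :: "nat \<Rightarrow> nat list \<Rightarrow> 'k" where "G j = Hop n (E (a # delete_at j \<tau>))" for j
  have sV: "set \<tau> \<subseteq> {..<n}" using assms by (simp add: \<tau>_def)
  have T1: "(\<Sum>k<s-1. \<Sum>j<length \<tau>.
         sc ((-1)^j) (E (((a+k) mod n) # ((a+Suc k) mod n) # delete_at j \<tau>)) :: nat list \<Rightarrow> 'k)
        = (\<Sum>j<length \<tau>. sc ((-1)^j) (F j))"
    unfolding F_def sc_sum by (rule sum.swap)
  have HB: "Hop n (bdE (a#\<tau>)) = HE n \<tau> - (\<Sum>j<length \<tau>. sc ((-1)^j) (G j))"
  proof -
    have "Hop n (bdE (a#\<tau>)) = Hop n (E \<tau>) - (\<Sum>j<length \<tau>. sc ((-1)^j) (G j))"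
      by (simp add: bdE_Cons Hop_diff Hop_sum Hop_sc G_def)
    moreover have "E \<tau> = (ch \<tau> :: nat list \<Rightarrow> 'k)" using assms(4) by (simp add: E_ch \<tau>_def)
    ultimately show ?thesis using Hop_ch[OF sV, where 'k='k] by simp
  qed
  have FG: "F j + G j = 0" if j: "0 < j" "j < length \<tau>" for j
  proof -
    obtain i where i: "j = Suc i" using j by (cases j) auto
    define y where "y = delete_at i \<rho>"
    have dj: "delete_at j \<tau> = b # y" by (simp add: i y_def \<tau>_def)
    have yV: "set (a#b#y) \<subseteq> {..<n}"
      using assms set_delete_at[of i \<rho>] by (auto simp: y_def)
    show ?thesis
    proof (cases "regular_path (b#y)")
      case True
      have "G j = HE n (a#b#y)"
        using True assms(3) Hop_ch[OF yV, where 'k='k] by (simp add: G_def dj E_ch)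
      also have "\<dots> = - (\<Sum>k<s-1. ch (((a+k) mod n) # ((a + Suc k) mod n) # b # y))"
        by (simp add: s_def)
      finally have g: "G j = \<dots>" .
      have "F j = (\<Sum>k<s-1. ch (((a+k) mod n) # ((a + Suc k) mod n) # b # y))"
        unfolding F_def dj
      proof (intro sum.cong refl)
        fix k assume "k \<in> {..<s-1}"
        then have "Suc k < gap n a b" by (simp add: s_def)
        then have "(a + Suc k) mod n \<noteq> b" using gap_ne[OF assms(1) _ assms(2)] by blast
        moreover have "(a + k) mod n \<noteq> (a + Suc k) mod n" using mod_suc_ne[OF assms(6)] .
        ultimately show "E (((a+k) mod n) # ((a + Suc k) mod n) # b # y) =
             (ch (((a+k) mod n) # ((a + Suc k) mod n) # b # y) :: nat list \<Rightarrow> 'k)"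
          using True by (simp add: E_ch)
      qed
      with g show ?thesis by simp
    next
      case False
      have "G j = 0" using False by (simp add: G_def dj E_nreg Hop_zero)
      moreover have "F j = 0" using False by (simp add: F_def dj E_nreg)
      ultimately show ?thesis by simp
    qed
  qed
  have T12: "(\<Sum>j<length \<tau>. sc ((-1)^j) (F j)) + (\<Sum>j<length \<tau>. sc ((-1)^j) (G j)) = F 0 + G 0"
  proof -
    have "(\<Sum>j<length \<tau>. sc ((-1)^j) (F j)) + (\<Sum>j<length \<tau>. sc ((-1)^j) (G j))
        = (\<Sum>j<Suc (length \<rho>). sc ((-1)^j) (F j + G j))"
      by (simp add: \<tau>_def sum.distrib sc_add del: sum.lessThan_Suc)
    also have "\<dots> = sc ((-1)^0) (F 0 + G 0) + (\<Sum>i<length \<rho>. sc ((-1)^Suc i) (F (Suc i) + G (Suc i)))"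
      by (rule sum.lessThan_Suc_shift)
    also have "(\<Sum>i<length \<rho>. sc ((-1)^Suc i) (F (Suc i) + G (Suc i))) = 0"
      by (intro sum.neutral) (auto simp: FG \<tau>_def)
    also have "sc ((-1)^0) (F 0 + G 0) + 0 = F 0 + G 0" by simp
    finally show ?thesis .
  qed
  have "path_bd {..<n} (HE n (a#b#\<rho>)) + Hop n (bdE (a#b#\<rho>)) =
     (ch (a#b#\<rho>) - ch (((a + (s - 1)) mod n) # b # \<rho>) - (\<Sum>j<length \<tau>. sc ((-1)^j) (F j)))
     + (HE n \<tau> - (\<Sum>j<length \<tau>. sc ((-1)^j) (G j)) :: nat list \<Rightarrow> 'k)"
    using bdHE[OF assms(1-5), where 'k='k] T1 HB by (simp add: s_def \<tau>_def)
  also have "\<dots> = ch (a#b#\<rho>) - ch (((a + (s - 1)) mod n) # b # \<rho>) + HE n \<tau> - (F 0 + G 0)"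
    using T12 by (simp add: algebra_simps)
  finally show ?thesis by (simp add: F_def G_def \<tau>_def s_def)
qed

lemma Qs_split:
  assumes "a < n" "(a + s) mod n = b" "1 \<le> s" "1 \<le> s2"
  shows "(Qs n a (s + s2 - 1) t :: nat list \<Rightarrow> 'k::comm_ring_1) =
     Qs n a (s - 1) t + ch (((a + (s-1)) mod n) # b # t) + Qs n b (s2 - 1) t"
proof -
  define f :: "nat \<Rightarrow> nat list \<Rightarrow> 'k" where "f k = ch (((a+k) mod n) # ((a + Suc k) mod n) # t)" for k
  have "Qs n a (s + s2 - 1) t = (\<Sum>k<(s-1) + s2. f k)"
    using assms by (simp add: Qs_def f_def)
  also have "\<dots> = (\<Sum>k<s-1. f k) + (\<Sum>i<s2. f (s - 1 + i))"
    by (rule sum_lessThan_add_split)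
  also have "(\<Sum>i<s2. f (s - 1 + i)) = (\<Sum>i<Suc (s2 - 1). f (s - 1 + i))"
    using assms by simp
  also have "\<dots> = f (s - 1 + 0) + (\<Sum>i<s2 - 1. f (s - 1 + Suc i))"
    by (rule sum.lessThan_Suc_shift)
  also have "f (s - 1 + 0) = ch (((a + (s-1)) mod n) # b # t)"
    using assms by (simp add: f_def)
  also have "(\<Sum>i<s2 - 1. f (s - 1 + Suc i)) = Qs n b (s2 - 1) t"
    unfolding Qs_def
  proof (intro sum.cong refl)
    fix i
    have e1: "a + (s - 1 + Suc i) = (a + s) + i" using assms by simp
    have e2: "a + Suc (s - 1 + Suc i) = (a + s) + Suc i" using assms by simp
    have "(a + s + i) mod n = (b + i) mod n" using assms(2) by (metis mod_add_left_eq)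
    moreover have "(a + s + Suc i) mod n = (b + Suc i) mod n" using assms(2) by (metis mod_add_left_eq)
    ultimately show "f (s - 1 + Suc i) = ch (((b+i) mod n) # ((b + Suc i) mod n) # t)"
      unfolding f_def e1 e2 by simp
  qed
  also have "(\<Sum>k<s-1. f k) = Qs n a (s - 1) t" by (simp add: Qs_def f_def)
  finally show ?thesis by (simp only: add.assoc)
qed

lemma main_id:
  fixes a b c :: nat
  assumes "a < n" "b < n" "c < n" "set r \<subseteq> {..<n}" "regular_path (a#b#c#r)"
    "gap n a b + gap n b c < n" "2 \<le> n"
  shows "path_bd {..<n} (HE n (a#b#c#r)) + Hop n (bdE (a#b#c#r)) = (ch (a#b#c#r) :: nat list \<Rightarrow> 'k::comm_ring_1)"
proof -
  define s where "s = gap n a b"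
  define s2 where "s2 = gap n b c"
  have ab: "a \<noteq> b" and bc: "b \<noteq> c" and rr: "regular_path (c#r)" using assms(5) by auto
  have s1: "1 \<le> s" using gap_pos[OF assms(1,2) ab] by (simp add: s_def)
  have s21: "1 \<le> s2" using gap_pos[OF assms(2,3) bc] by (simp add: s2_def)
  have gac: "gap n a c = s + s2" using gap_add[OF assms(1-3,6)] by (simp add: s_def s2_def)
  have ac: "a \<noteq> c"
  proof
    assume "a = c"
    then have "gap n a c = 0" by (simp add: gap_def)
    with gac s1 show False by simp
  qed
  have bs: "(a + s) mod n = b" using gap_eq[OF assms(1), of b] assms(2) by (simp add: s_def)
  have cV: "set (a#c#r) \<subseteq> {..<n}" using assms by auto
  have 1: "HE n (b#c#r) = - (Qs n b (s2 - 1) (c#r) :: nat list \<Rightarrow> 'k)"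
    by (simp only: HE_Qs s2_def)
  have 2: "(\<Sum>k<s-1. E (((a+k) mod n) # ((a+Suc k) mod n) # c # r)) = (Qs n a (s-1) (c#r) :: nat list \<Rightarrow> 'k)"
    unfolding Qs_def
  proof (intro sum.cong refl)
    fix k assume "k \<in> {..<s-1}"
    then have "Suc k < gap n a c" using gac by simp
    then have "(a + Suc k) mod n \<noteq> c" using gap_ne[OF assms(1) _ assms(3)] by blast
    moreover have "(a + k) mod n \<noteq> (a + Suc k) mod n" using mod_suc_ne[OF assms(7)] .
    ultimately show "E (((a+k) mod n) # ((a + Suc k) mod n) # c # r) =
         (ch (((a+k) mod n) # ((a + Suc k) mod n) # c # r) :: nat list \<Rightarrow> 'k)"
      using rr by (simp add: E_ch)
  qed
  have 3: "Hop n (E (a#c#r)) = - (Qs n a (s + s2 - 1) (c#r) :: nat list \<Rightarrow> 'k)"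
  proof -
    have "E (a#c#r) = (ch (a#c#r) :: nat list \<Rightarrow> 'k)" using ac rr by (simp add: E_ch)
    then have "Hop n (E (a#c#r)) = (HE n (a#c#r) :: nat list \<Rightarrow> 'k)" using Hop_ch[OF cV, where 'k='k] by simp
    then show ?thesis by (simp only: HE_Qs gac)
  qed
  have 4: "(Qs n a (s + s2 - 1) (c#r) :: nat list \<Rightarrow> 'k) =
     Qs n a (s - 1) (c#r) + ch (((a + (s-1)) mod n) # b # c # r) + Qs n b (s2 - 1) (c#r)"
    by (rule Qs_split[OF assms(1) bs s1 s21])
  have "path_bd {..<n} (HE n (a#b#c#r)) + Hop n (bdE (a#b#c#r)) =
    ch (a#b#c#r) - ch (((a + (s - 1)) mod n) # b # c # r) + HE n (b#c#r)
    - ((\<Sum>k<s - 1. E (((a+k) mod n) # ((a+Suc k) mod n) # c # r)) + Hop n (E (a#c#r)) :: nat list \<Rightarrow> 'k)"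
    using comb[OF assms(1,2) ab _ _ assms(7), of "c#r"] assms(3,4,5) by (simp add: s_def)
  also have "\<dots> = ch (a#b#c#r)" unfolding 1 2 3 4 by (simp add: algebra_simps)
  finally show ?thesis .
qed

lemma deg1_id:
  fixes a b :: nat
  assumes "a < n" "b < n" "a \<noteq> b" "2 \<le> n"
  shows "path_bd {..<n} (HE n [a,b]) + Hop n (bdE [a,b]) = (ch [a,b] - Qs n a (gap n a b) [] :: nat list \<Rightarrow> 'k::comm_ring_1)"
proof -
  define s where "s = gap n a b"
  have s1: "1 \<le> s" using gap_pos[OF assms(1-3)] by (simp add: s_def)
  have bs: "(a + s) mod n = b" using gap_eq[OF assms(1), of b] assms(2) by (simp add: s_def)
  have 2: "(\<Sum>k<s-1. E [(a+k) mod n, (a+Suc k) mod n]) = (Qs n a (s-1) [] :: nat list \<Rightarrow> 'k)"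
    unfolding Qs_def
  proof (intro sum.cong refl)
    fix k
    have "(a + k) mod n \<noteq> (a + Suc k) mod n" using mod_suc_ne[OF assms(4)] .
    then show "E [(a+k) mod n, (a + Suc k) mod n] = (ch [(a+k) mod n, (a + Suc k) mod n] :: nat list \<Rightarrow> 'k)"
      by (simp add: E_ch)
  qed
  have 3: "Hop n (E [a]) = (0 :: nat list \<Rightarrow> 'k)"
  proof -
    have "E [a] = (ch [a] :: nat list \<Rightarrow> 'k)" by (simp add: E_ch)
    then show ?thesis using Hop_ch[of "[a]" n, where 'k='k] assms by simp
  qed
  have 4: "(Qs n a s [] :: nat list \<Rightarrow> 'k) = Qs n a (s-1) [] + ch [(a + (s-1)) mod n, b]"
  proof -
    have "(Qs n a s [] :: nat list \<Rightarrow> 'k) = Qs n a (Suc (s-1)) []" using s1 by simp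
    also have "\<dots> = Qs n a (s-1) [] + ch [(a + (s-1)) mod n, (a + Suc (s - 1)) mod n]"
      by (simp add: Qs_def)
    also have "(a + Suc (s - 1)) mod n = b" using bs s1 by simp
    finally show ?thesis .
  qed
  have "path_bd {..<n} (HE n [a,b]) + Hop n (bdE [a,b]) =
    ch [a,b] - ch [(a + (s - 1)) mod n, b] + HE n [b]
    - ((\<Sum>k<s - 1. E [(a+k) mod n, (a+Suc k) mod n]) + Hop n (E [a]) :: nat list \<Rightarrow> 'k)"
    using comb[OF assms(1,2,3) _ _ assms(4), of "[]"] by (simp add: s_def)
  also have "\<dots> = ch [a,b] - Qs n a s []" unfolding 2 3 4 by (simp add: algebra_simps)
  finally show ?thesis by (simp add: s_def)
qed

lemma gap_self[simp]: "gap n a a = 0" by (simp add: gap_def)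

lemma arrow_gap:
  assumes "d < n" "x < n" "y < n" "circulant_arrow n {1..d} x y"
  shows "1 \<le> gap n x y" "gap n x y \<le> d" "x \<noteq> y"
proof -
  show g1: "1 \<le> gap n x y" and "gap n x y \<le> d" using circ_arrow[OF assms(2,3,1)] assms(4) by auto
  show "x \<noteq> y" using g1 by auto
qed

lemma allowed_reg:
  assumes "d < n" "\<sigma> \<in> allowed_paths {..<n} (circulant_arrow n {1..d}) p"
  shows "regular_path \<sigma>"
  unfolding regular_path_def
proof (intro allI impI)
  fix i assume i: "Suc i < length \<sigma>"
  have "circulant_arrow n {1..d} (\<sigma>!i) (\<sigma>!Suc i)" using assms(2) i by (simp add: allowed_paths_def)
  moreover have "\<sigma>!i \<in> set \<sigma>" "\<sigma>!Suc i \<in> set \<sigma>" using i by auto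
  then have "\<sigma>!i < n" "\<sigma>!Suc i < n" using assms(2) by (auto simp: allowed_paths_def)
  ultimately show "\<sigma>!i \<noteq> \<sigma>!Suc i" using arrow_gap[OF assms(1)] by blast
qed

lemma decomp:
  fixes c :: "'v list \<Rightarrow> 'k::comm_ring_1"
  assumes "finite S" "\<And>w. c w \<noteq> 0 \<Longrightarrow> w \<in> S"
  shows "c = (\<Sum>\<sigma>\<in>S. sc (c \<sigma>) (ch \<sigma>))"
proof (rule ext)
  fix w
  have "(\<Sum>\<sigma>\<in>S. sc (c \<sigma>) (ch \<sigma>)) w = (\<Sum>\<sigma>\<in>S. if \<sigma> = w then c \<sigma> else 0)"
    unfolding sum_fun_apply by (intro sum.cong) (auto simp: ch_def)
  also have "\<dots> = (if w \<in> S then c w else 0)" using assms(1) by (simp add: sum.delta')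
  also have "\<dots> = c w" using assms(2) by auto
  finally show "c w = (\<Sum>\<sigma>\<in>S. sc (c \<sigma>) (ch \<sigma>)) w" by simp
qed

lemma A_LL: "c \<in> A_space K V R p \<Longrightarrow> c w \<noteq> 0 \<Longrightarrow> w \<in> LL V (Suc p)"
  by (auto simp: A_space_def allowed_paths_def LL_def)

lemma chain_hom:
  fixes c :: "nat list \<Rightarrow> 'k::comm_ring_1"
  assumes "c \<in> A_space K {..<n} R p"
  shows "path_bd {..<n} (Hop n c) + Hop n (path_bd {..<n} c) =
     (\<Sum>\<sigma>\<in>LL {..<n} (Suc p). sc (c \<sigma>) (path_bd {..<n} (HE n \<sigma>) + Hop n (bdE \<sigma>)))"
proof -
  define S where "S = LL {..<n} (Suc p)"
  have fS: "finite S" unfolding S_def by (rule finite_LL) simp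
  have cdec: "c = (\<Sum>\<sigma>\<in>S. sc (c \<sigma>) (ch \<sigma>))"
    using decomp[OF fS, of c] A_LL[OF assms] by (auto simp: S_def)
  have sS: "set \<sigma> \<subseteq> {..<n}" if "\<sigma> \<in> S" for \<sigma> using that by (simp add: S_def LL_def)
  have h1: "Hop n c = (\<Sum>\<sigma>\<in>S. sc (c \<sigma>) (HE n \<sigma>))"
  proof -
    have "Hop n c = Hop n (\<Sum>\<sigma>\<in>S. sc (c \<sigma>) (ch \<sigma>))" by (rule arg_cong[OF cdec])
    also have "\<dots> = (\<Sum>\<sigma>\<in>S. sc (c \<sigma>) (HE n \<sigma>))"
      unfolding Hop_sum Hop_sc using Hop_ch[OF sS, where 'k='k] by (intro sum.cong) auto
    finally show ?thesis .
  qed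
  have h2: "path_bd {..<n} c = (\<Sum>\<sigma>\<in>S. sc (c \<sigma>) (bdE \<sigma>))"
  proof -
    have "path_bd {..<n} c = path_bd {..<n} (\<Sum>\<sigma>\<in>S. sc (c \<sigma>) (ch \<sigma>))" by (rule arg_cong[OF cdec])
    also have "\<dots> = (\<Sum>\<sigma>\<in>S. sc (c \<sigma>) (bdE \<sigma>))"
      unfolding path_bd_sum path_bd_sc using path_bd_ch[OF sS finite_lessThan, where 'k='k]
      by (intro sum.cong) auto
    finally show ?thesis .
  qed
  show ?thesis
    unfolding h1 h2 path_bd_sum path_bd_sc Hop_sum Hop_sc S_def[symmetric]
    by (simp add: sum.distrib sc_add)
qed

lemma hom2:
  fixes c :: "nat list \<Rightarrow> 'k::comm_ring_1"
  assumes "2 * d < n" "1 \<le> d" "2 \<le> p" "c \<in> A_space K {..<n} (circulant_arrow n {1..d}) p"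
  shows "path_bd {..<n} (Hop n c) + Hop n (path_bd {..<n} c) = c"
proof -
  define S where "S = LL {..<n} (Suc p)"
  have fS: "finite S" unfolding S_def by (rule finite_LL) simp
  have "path_bd {..<n} (Hop n c) + Hop n (path_bd {..<n} c) =
     (\<Sum>\<sigma>\<in>S. sc (c \<sigma>) (path_bd {..<n} (HE n \<sigma>) + Hop n (bdE \<sigma>)))"
    unfolding S_def by (rule chain_hom[OF assms(4)])
  also have "\<dots> = (\<Sum>\<sigma>\<in>S. sc (c \<sigma>) (ch \<sigma>))"
  proof (intro sum.cong refl)
    fix \<sigma> assume "\<sigma> \<in> S"
    show "sc (c \<sigma>) (path_bd {..<n} (HE n \<sigma>) + Hop n (bdE \<sigma>)) = sc (c \<sigma>) (ch \<sigma>)"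
    proof (cases "c \<sigma> = 0")
      case True then show ?thesis by simp
    next
      case False
      then have al: "\<sigma> \<in> allowed_paths {..<n} (circulant_arrow n {1..d}) p"
        using assms(4) by (auto simp: A_space_def)
      have dn: "d < n" using assms(1) by simp
      have reg: "regular_path \<sigma>" by (rule allowed_reg[OF dn al])
      obtain p' where p': "p = Suc (Suc p')" using assms(3) by (metis add_2_eq_Suc le_Suc_ex)
      have "length \<sigma> = Suc (Suc (Suc p'))" using al p' by (simp add: allowed_paths_def)
      then obtain a b e r where \<sigma>: "\<sigma> = a # b # e # r"
        by (metis length_Suc_conv)
      have sV: "set \<sigma> \<subseteq> {..<n}" using al by (simp add: allowed_paths_def)
      then have abe: "a < n" "b < n" "e < n" "set r \<subseteq> {..<n}" using \<sigma> by auto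
      have ar1: "circulant_arrow n {1..d} a b" and ar2: "circulant_arrow n {1..d} b e"
        using al unfolding \<sigma> p' allowed_Cons2 by auto
      have "gap n a b \<le> d" "gap n b e \<le> d"
        using arrow_gap[OF dn abe(1,2) ar1] arrow_gap[OF dn abe(2,3) ar2] by auto
      then have gsum: "gap n a b + gap n b e < n" using assms(1) by simp
      have n2: "2 \<le> n" using assms(1,2) by simp
      show ?thesis
        using main_id[OF abe reg[unfolded \<sigma>] gsum n2, where 'k='k] by (simp add: \<sigma>)
    qed
  qed
  also have "\<dots> = c"
    using decomp[OF fS, of c] A_LL[OF assms(4)] by (auto simp: S_def)
  finally show ?thesis .
qed

fun U :: "nat \<Rightarrow> nat list \<Rightarrow> nat list \<Rightarrow> 'k::comm_ring_1" where
  "U n [a, b] = Qs n a (gap n a b) []"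
| "U n _ = 0"

lemma hom1:
  fixes c :: "nat list \<Rightarrow> 'k::comm_ring_1"
  assumes "2 * d < n" "1 \<le> d" "c \<in> A_space K {..<n} (circulant_arrow n {1..d}) 1"
  shows "path_bd {..<n} (Hop n c) + Hop n (path_bd {..<n} c) = c - (\<Sum>\<sigma>\<in>LL {..<n} 2. sc (c \<sigma>) (U n \<sigma>))"
proof -
  define S where "S = LL {..<n} 2"
  have fS: "finite S" unfolding S_def by (rule finite_LL) simp
  have "path_bd {..<n} (Hop n c) + Hop n (path_bd {..<n} c) =
     (\<Sum>\<sigma>\<in>S. sc (c \<sigma>) (path_bd {..<n} (HE n \<sigma>) + Hop n (bdE \<sigma>)))"
    unfolding S_def using chain_hom[OF assms(3)] by (simp add: numeral_2_eq_2)
  also have "\<dots> = (\<Sum>\<sigma>\<in>S. sc (c \<sigma>) (ch \<sigma>) - sc (c \<sigma>) (U n \<sigma>))"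
  proof (intro sum.cong refl)
    fix \<sigma> assume "\<sigma> \<in> S"
    show "sc (c \<sigma>) (path_bd {..<n} (HE n \<sigma>) + Hop n (bdE \<sigma>)) = sc (c \<sigma>) (ch \<sigma>) - sc (c \<sigma>) (U n \<sigma>)"
    proof (cases "c \<sigma> = 0")
      case True then show ?thesis by simp
    next
      case False
      then have al: "\<sigma> \<in> allowed_paths {..<n} (circulant_arrow n {1..d}) 1"
        using assms(3) by (auto simp: A_space_def)
      have dn: "d < n" using assms(1) by simp
      have reg: "regular_path \<sigma>" by (rule allowed_reg[OF dn al])
      have "length \<sigma> = Suc (Suc 0)" using al by (simp add: allowed_paths_def)
      then obtain a b where \<sigma>: "\<sigma> = [a, b]"
        by (metis length_0_conv length_Suc_conv)
      have sV: "set \<sigma> \<subseteq> {..<n}" using al by (simp add: allowed_paths_def)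
      then have ab: "a < n" "b < n" using \<sigma> by auto
      have n2: "2 \<le> n" using assms(1,2) by simp
      have "a \<noteq> b" using reg \<sigma> by simp
      then show ?thesis
        using deg1_id[OF ab _ n2, where 'k='k] by (simp add: \<sigma> sc_diff)
    qed
  qed
  also have "\<dots> = c - (\<Sum>\<sigma>\<in>S. sc (c \<sigma>) (U n \<sigma>))"
    using decomp[OF fS, of c] A_LL[OF assms(3)] by (simp add: sum_subtractf S_def numeral_2_eq_2)
  finally show ?thesis by (simp add: S_def)
qed

lemma gap_one: assumes "2 \<le> n" "x < n" shows "gap n x (Suc x mod n) = 1"
  using assms by (intro gap_unique) auto

lemma unit_arrow:
  assumes "1 \<le> d" "d < n" "2 \<le> n"
  shows "circulant_arrow n {1..d} ((a + k) mod n) ((a + Suc k) mod n)"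
  unfolding circulant_arrow_def using assms
  by (intro bexI[of _ 1]) (auto simp: mod_Suc_eq)

lemma Hop_A:
  fixes c :: "nat list \<Rightarrow> 'k::comm_ring_1"
  assumes "2 * d < n" "1 \<le> d" "c \<in> A_space K {..<n} (circulant_arrow n {1..d}) (Suc p)"
  shows "Hop n c \<in> A_space K {..<n} (circulant_arrow n {1..d}) (Suc (Suc p))"
  unfolding A_space_def
proof (intro CollectI allI impI)
  fix w assume "Hop n c w \<noteq> 0"
  then obtain u where u: "c u \<noteq> 0" "HE n u w \<noteq> (0::'k)"
    unfolding Hop_def by (metis (no_types, lifting) mult_not_zero sum.neutral)
  have al: "u \<in> allowed_paths {..<n} (circulant_arrow n {1..d}) (Suc p)"
    using u(1) assms(3) by (auto simp: A_space_def)
  obtain a b r k where ab: "u = a # b # r" "k < gap n a b - 1"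
      "w = ((a+k) mod n) # ((a + Suc k) mod n) # b # r"
    using HE_nz[OF u(2)] by blast
  have dn: "d < n" and n2: "2 \<le> n" using assms by auto
  have aV: "a < n" "b < n" using al ab by (auto simp: allowed_paths_def)
  have ar: "circulant_arrow n {1..d} a b" and rest: "b # r \<in> allowed_paths {..<n} (circulant_arrow n {1..d}) p"
    using al unfolding ab allowed_Cons2 by auto
  have gd: "gap n a b \<le> d" using arrow_gap[OF dn aV ar] by simp
  define s where "s = gap n a b"
  have bs: "(a + s) mod n = b" using gap_eq[OF aV(1), of b] aV by (simp add: s_def)
  have g2: "gap n ((a + Suc k) mod n) b = s - Suc k"
  proof (rule gap_unique)
    show "(a + Suc k) mod n < n" using n2 by simp
    show "s - Suc k < n" using gd dn by (simp add: s_def)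
    have "((a + Suc k) mod n + (s - Suc k)) mod n = (a + Suc k + (s - Suc k)) mod n"
      by (simp add: mod_add_left_eq)
    also have "a + Suc k + (s - Suc k) = a + s" using ab(2) by (simp add: s_def)
    finally show "((a + Suc k) mod n + (s - Suc k)) mod n = b" using bs by simp
  qed
  have r1: "1 \<le> s - Suc k" "s - Suc k \<le> d" using ab(2) gd by (auto simp: s_def)
  have ar2: "circulant_arrow n {1..d} ((a + Suc k) mod n) b"
    using circ_arrow[of "(a + Suc k) mod n" n b d] g2 r1 aV dn n2 by simp
  show "w \<in> allowed_paths {..<n} (circulant_arrow n {1..d}) (Suc (Suc p))"
    unfolding ab(3) allowed_Cons2 using n2 unit_arrow[OF assms(2) dn n2] ar2 rest by auto
qed

lemma Hm_zero:
  fixes z :: "nat list \<Rightarrow> 'k::comm_ring_1"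
  assumes "2 * d < n" "1 \<le> d" "2 \<le> m" "z \<in> path_cycles TYPE('k) {..<n} (circulant_arrow n {1..d}) m"
  shows "z \<in> path_boundaries TYPE('k) {..<n} (circulant_arrow n {1..d}) m"
proof -
  have zA: "z \<in> A_space TYPE('k) {..<n} (circulant_arrow n {1..d}) m" and zc: "path_bd {..<n} z = 0"
    using assms(4) by (auto simp: path_cycles_def Omega_space_def zero_fun_def)
  have "path_bd {..<n} (Hop n z) + Hop n (path_bd {..<n} z) = z"
    by (rule hom2[OF assms(1,2,3) zA])
  then have pz: "path_bd {..<n} (Hop n z) = z" using zc by (simp add: Hop_zero)
  obtain m' where m': "m = Suc m'" using assms(3) by (cases m) auto
  have "Hop n z \<in> A_space TYPE('k) {..<n} (circulant_arrow n {1..d}) (Suc m)"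
    using Hop_A[OF assms(1,2), of z "TYPE('k)" m'] zA m' by simp
  then have "Hop n z \<in> Omega_space TYPE('k) {..<n} (circulant_arrow n {1..d}) (Suc m)"
    using pz zA by (simp add: Omega_space_def)
  then show ?thesis unfolding path_boundaries_def using pz by (metis image_eqI)
qed

lemma A_zero: "0 \<in> A_space K V R p" by (simp add: A_space_def)
lemma A_add: assumes "f \<in> A_space K V R p" "g \<in> A_space K V R p" shows "f + g \<in> A_space K V R p"
  unfolding A_space_def
proof (intro CollectI allI impI)
  fix w assume "(f + g) w \<noteq> 0"
  then have "f w \<noteq> 0 \<or> g w \<noteq> 0" by auto
  then show "w \<in> allowed_paths V R p" using assms by (auto simp: A_space_def)
qed
lemma A_diff: assumes "f \<in> A_space K V R p" "g \<in> A_space K V R p" shows "f - g \<in> A_space K V R p"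
  unfolding A_space_def
proof (intro CollectI allI impI)
  fix w assume "(f - g) w \<noteq> 0"
  then have "f w \<noteq> 0 \<or> g w \<noteq> 0" by auto
  then show "w \<in> allowed_paths V R p" using assms by (auto simp: A_space_def)
qed
lemma A_sc: assumes "f \<in> A_space K V R p" shows "sc a f \<in> A_space K V R p"
  unfolding A_space_def
proof (intro CollectI allI impI)
  fix w assume "sc a f w \<noteq> 0"
  then have "f w \<noteq> 0" by auto
  then show "w \<in> allowed_paths V R p" using assms by (auto simp: A_space_def)
qed
lemma A_sum: "(\<And>k. k \<in> S \<Longrightarrow> F k \<in> A_space K V R p) \<Longrightarrow> sum F S \<in> A_space K V R p"
  by (induction S rule: infinite_finite_induct) (auto intro: A_add A_zero)

lemma bdE_two: "bdE [a, b] = (ch [b] - ch [a] :: nat list \<Rightarrow> 'k::comm_ring_1)"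
  by (simp add: bdE_Cons2 E_ch)

lemma bdE_one: "bdE [a] = (0 :: nat list \<Rightarrow> 'k::comm_ring_1)"
  by (simp add: bdE_Cons E_def)

lemma path_bd_Qs:
  assumes "2 \<le> n"
  shows "path_bd {..<n} (Qs n a m []) = (ch [(a+m) mod n] - ch [a mod n] :: nat list \<Rightarrow> 'k::comm_ring_1)"
proof -
  define f :: "nat \<Rightarrow> nat list \<Rightarrow> 'k" where "f k = ch [(a+k) mod n]" for k
  have "path_bd {..<n} (Qs n a m [] :: nat list \<Rightarrow> 'k) = (\<Sum>k<m. path_bd {..<n} (ch [(a+k) mod n, (a + Suc k) mod n]))"
    by (simp add: Qs_def path_bd_sum)
  also have "\<dots> = (\<Sum>k<m. f (Suc k) - f k)"
  proof (intro sum.cong refl)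
    fix k
    have "set [(a+k) mod n, (a + Suc k) mod n] \<subseteq> {..<n}" using assms by auto
    then show "path_bd {..<n} (ch [(a+k) mod n, (a + Suc k) mod n]) = f (Suc k) - f k"
      by (simp add: path_bd_ch bdE_two f_def)
  qed
  also have "\<dots> = f m - f 0" by (rule sum_lessThan_telescope)
  finally show ?thesis by (simp add: f_def)
qed

lemma Qs_nz:
  assumes "Qs n a m t w \<noteq> (0::'k::comm_ring_1)"
  shows "\<exists>k<m. w = ((a+k) mod n) # ((a + Suc k) mod n) # t"
proof -
  have "\<exists>k\<in>{..<m}. ch (((a+k) mod n) # ((a + Suc k) mod n) # t) w \<noteq> (0::'k)"
    using assms unfolding Qs_def sum_fun_apply by (meson sum.neutral)
  then show ?thesis by (auto simp: ch_def split: if_splits)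
qed

lemma Qs_A:
  assumes "1 \<le> d" "d < n" "2 \<le> n"
  shows "(Qs n a m [] :: nat list \<Rightarrow> 'k::comm_ring_1) \<in> A_space K {..<n} (circulant_arrow n {1..d}) 1"
  unfolding A_space_def
proof (intro CollectI allI impI)
  fix w assume "Qs n a m [] w \<noteq> (0::'k)"
  then obtain k where "w = [(a+k) mod n, (a + Suc k) mod n]" using Qs_nz by blast
  then show "w \<in> allowed_paths {..<n} (circulant_arrow n {1..d}) 1"
    using unit_arrow[OF assms, of a k] assms
    by (simp add: allowed_Cons2[of _ _ _ _ _ 0, simplified] allowed_single)
qed

definition lin :: "nat set \<Rightarrow> nat \<Rightarrow> (nat list \<Rightarrow> 'k) \<Rightarrow> (nat list \<Rightarrow> 'k) \<Rightarrow> 'k::comm_ring_1" where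
  "lin V l g c = (\<Sum>w\<in>LL V l. c w * g w)"

lemma lin_add: "lin V l g (f + h) = lin V l g f + lin V l g h"
  by (simp add: lin_def distrib_right sum.distrib)
lemma lin_diff: "lin V l g (f - h) = lin V l g f - lin V l g h"
  by (simp add: lin_def left_diff_distrib sum_subtractf)
lemma lin_sc: "lin V l g (sc a f) = a * lin V l g f"
  by (simp add: lin_def sum_distrib_left mult.assoc)
lemma lin_sum: "lin V l g (sum F S) = (\<Sum>k\<in>S. lin V l g (F k))"
  unfolding lin_def sum_fun_apply sum_distrib_right by (rule sum.swap)
lemma lin_ch: "finite V \<Longrightarrow> w \<in> LL V l \<Longrightarrow> lin V l g (ch w) = g w"
proof -
  assume "finite V" "w \<in> LL V l"
  have "lin V l g (ch w) = (\<Sum>u\<in>LL V l. if w = u then g u else 0)"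
    unfolding lin_def by (intro sum.cong) (auto simp: ch_def)
  also have "\<dots> = g w" using \<open>w \<in> LL V l\<close> by (simp add: sum.delta'[OF finite_LL[OF \<open>finite V\<close>]])
  finally show ?thesis .
qed

lemma bd_dec:
  fixes c :: "nat list \<Rightarrow> 'k::comm_ring_1"
  assumes "c \<in> A_space K {..<n} R p"
  shows "path_bd {..<n} c = (\<Sum>\<sigma>\<in>LL {..<n} (Suc p). sc (c \<sigma>) (bdE \<sigma>))"
proof -
  define S where "S = LL {..<n} (Suc p)"
  have fS: "finite S" unfolding S_def by (rule finite_LL) simp
  have cdec: "c = (\<Sum>\<sigma>\<in>S. sc (c \<sigma>) (ch \<sigma>))"
    using decomp[OF fS, of c] A_LL[OF assms] by (auto simp: S_def)
  have sS: "set \<sigma> \<subseteq> {..<n}" if "\<sigma> \<in> S" for \<sigma> using that by (simp add: S_def LL_def)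
  have "path_bd {..<n} c = path_bd {..<n} (\<Sum>\<sigma>\<in>S. sc (c \<sigma>) (ch \<sigma>))" by (rule arg_cong[OF cdec])
  also have "\<dots> = (\<Sum>\<sigma>\<in>S. sc (c \<sigma>) (bdE \<sigma>))"
    unfolding path_bd_sum path_bd_sc using path_bd_ch[OF sS finite_lessThan, where 'k='k]
    by (intro sum.cong) auto
  finally show ?thesis by (simp add: S_def)
qed

lemma lin_bd_zero:
  fixes c :: "nat list \<Rightarrow> 'k::comm_ring_1"
  assumes "c \<in> A_space K {..<n} R p"
    "\<And>\<sigma>. \<sigma> \<in> allowed_paths {..<n} R p \<Longrightarrow> lin {..<n} p g (bdE \<sigma>) = 0"
  shows "lin {..<n} p g (path_bd {..<n} c) = 0"
proof -
  have "lin {..<n} p g (path_bd {..<n} c) = (\<Sum>\<sigma>\<in>LL {..<n} (Suc p). c \<sigma> * lin {..<n} p g (bdE \<sigma>))"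
    unfolding bd_dec[OF assms(1)] lin_sum lin_sc ..
  also have "\<dots> = 0"
  proof (intro sum.neutral ballI)
    fix \<sigma> show "c \<sigma> * lin {..<n} p g (bdE \<sigma>) = 0"
      using assms by (cases "c \<sigma> = 0") (auto simp: A_space_def)
  qed
  finally show ?thesis .
qed

lemma H0:
  assumes "2 * d < n" "1 \<le> d"
  shows "path_homology_is_K TYPE('k::field_char_0) {..<n} (circulant_arrow n {1..d}) 0"
proof -
  let ?R = "circulant_arrow n {1..d}"
  have n2: "2 \<le> n" and dn: "d < n" using assms by auto
  define z :: "nat list \<Rightarrow> 'k" where "z = ch [0]"
  have A0_ch: "(ch [v] :: nat list \<Rightarrow> 'k) \<in> A_space TYPE('k) {..<n} ?R 0" if "v < n" for v
    using that by (auto simp: A_space_def ch_def allowed_single)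
  have bd0: "path_bd {..<n} c = 0" if "c \<in> A_space TYPE('k) {..<n} ?R 0" for c :: "nat list \<Rightarrow> 'k"
    using bd_dec[OF that] by (auto intro!: sum.neutral simp: LL_def length_Suc_conv bdE_one)
  have zc: "z \<in> path_cycles TYPE('k) {..<n} ?R 0"
    unfolding path_cycles_def Omega_space_def z_def
    using A0_ch[of 0] bd0[OF A0_ch[of 0]] n2 by (simp add: zero_fun_def)
  have nb: "z \<notin> path_boundaries TYPE('k) {..<n} ?R 0"
  proof
    assume "z \<in> path_boundaries TYPE('k) {..<n} ?R 0"
    then obtain b where b: "b \<in> Omega_space TYPE('k) {..<n} ?R 1" "z = path_bd {..<n} b"
      unfolding path_boundaries_def by auto
    have bA: "b \<in> A_space TYPE('k) {..<n} ?R (Suc 0)" using b(1) by (simp add: Omega_space_def)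
    have "lin {..<n} (Suc 0) (\<lambda>_. 1) (path_bd {..<n} b) = (0::'k)"
    proof (rule lin_bd_zero[OF bA])
      fix \<sigma> assume "\<sigma> \<in> allowed_paths {..<n} ?R (Suc 0)"
      then obtain x y where "\<sigma> = [x, y]" "x < n" "y < n"
        by (auto simp: allowed_paths_def length_Suc_conv)
      then show "lin {..<n} (Suc 0) (\<lambda>_. 1) (bdE \<sigma>) = (0::'k)"
        by (simp add: bdE_two lin_diff lin_ch LL_def)
    qed
    moreover have "lin {..<n} (Suc 0) (\<lambda>_. 1) z = (1::'k)"
      unfolding z_def using n2 by (simp add: lin_ch LL_def)
    ultimately show False using b(2) by simp
  qed
  have every: "\<exists>a. (\<lambda>w. z' w - a * z w) \<in> path_boundaries TYPE('k) {..<n} ?R 0"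
    if z': "z' \<in> path_cycles TYPE('k) {..<n} ?R 0" for z'
  proof -
    have z'A: "z' \<in> A_space TYPE('k) {..<n} ?R 0" using z' by (simp add: path_cycles_def Omega_space_def)
    define a where "a = (\<Sum>v<n. z' [v])"
    define b :: "nat list \<Rightarrow> 'k" where "b = (\<Sum>v<n. sc (z' [v]) (Qs n 0 v []))"
    have zdec: "(\<Sum>v<n. sc (z' [v]) (ch [v])) = z'"
    proof (rule ext)
      fix w
      show "(\<Sum>v<n. sc (z' [v]) (ch [v])) w = z' w"
      proof (cases "\<exists>x<n. w = [x]")
        case True
        then obtain x where x: "x < n" "w = [x]" by blast
        have "(\<Sum>v<n. sc (z' [v]) (ch [v])) w = (\<Sum>v<n. if v = x then z' [v] else 0)"
          unfolding sum_fun_apply using x by (intro sum.cong) (auto simp: ch_def)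
        also have "\<dots> = z' w" using x by simp
        finally show ?thesis .
      next
        case False
        have "(\<Sum>v<n. sc (z' [v]) (ch [v])) w = 0"
          unfolding sum_fun_apply using False by (intro sum.neutral) (auto simp: ch_def)
        moreover have "z' w = 0"
        proof (rule ccontr)
          assume "z' w \<noteq> 0"
          then have "w \<in> allowed_paths {..<n} ?R 0" using z'A by (auto simp: A_space_def)
          then show False using False by (auto simp: allowed_paths_def length_Suc_conv)
        qed
        ultimately show ?thesis by simp
      qed
    qed
    have pb: "path_bd {..<n} b = z' - sc a z"
    proof -
      have "path_bd {..<n} b = (\<Sum>v<n. sc (z' [v]) (ch [v] - ch [0]))"
        unfolding b_def path_bd_sum path_bd_sc using n2 by (simp add: path_bd_Qs)
      also have "\<dots> = (\<Sum>v<n. sc (z' [v]) (ch [v])) - sc a z"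
        by (simp add: sc_diff sum_subtractf a_def z_def sc_sum[symmetric] sum_fun_apply
              sum_distrib_right fun_eq_iff)
      finally show ?thesis using zdec by simp
    qed
    have bA: "b \<in> A_space TYPE('k) {..<n} ?R 1"
      unfolding b_def by (intro A_sum A_sc Qs_A[OF assms(2) dn n2])
    have "path_bd {..<n} b \<in> A_space TYPE('k) {..<n} ?R 0"
      unfolding pb z_def using z'A A0_ch[of 0] n2 by (intro A_diff A_sc) auto
    then have "b \<in> Omega_space TYPE('k) {..<n} ?R 1" using bA by (simp add: Omega_space_def)
    moreover have "(\<lambda>w. z' w - a * z w) = path_bd {..<n} b" using pb by (simp add: fun_eq_iff)
    ultimately show ?thesis unfolding path_boundaries_def by auto
  qed
  show ?thesis unfolding path_homology_is_K_def using zc nb every by blast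
qed

lemma unit_cycle:
  fixes y :: "nat list \<Rightarrow> 'k::comm_ring_1"
  assumes n2: "2 \<le> n" and supp: "\<And>w. y w \<noteq> 0 \<Longrightarrow> \<exists>v<n. w = [v, Suc v mod n]"
    and cyc: "path_bd {..<n} y = 0"
  shows "y = sc (y [0, Suc 0 mod n]) (Qs n 0 n [])"
proof -
  define \<eta> where "\<eta> v = y [v, Suc v mod n]" for v
  have ydec: "y = (\<Sum>v<n. sc (\<eta> v) (ch [v, Suc v mod n]))"
  proof (rule ext)
    fix w
    show "y w = (\<Sum>v<n. sc (\<eta> v) (ch [v, Suc v mod n])) w"
    proof (cases "\<exists>x<n. w = [x, Suc x mod n]")
      case True
      then obtain x where x: "x < n" "w = [x, Suc x mod n]" by blast
      have "(\<Sum>v<n. sc (\<eta> v) (ch [v, Suc v mod n])) w = (\<Sum>v<n. if v = x then \<eta> v else 0)"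
        unfolding sum_fun_apply using x by (intro sum.cong) (auto simp: ch_def)
      also have "\<dots> = y w" using x by (simp add: \<eta>_def)
      finally show ?thesis by simp
    next
      case False
      have "(\<Sum>v<n. sc (\<eta> v) (ch [v, Suc v mod n])) w = 0"
        unfolding sum_fun_apply using False by (intro sum.neutral) (auto simp: ch_def)
      moreover have "y w = 0" using supp False by blast
      ultimately show ?thesis by simp
    qed
  qed
  have bdy: "path_bd {..<n} y = (\<Sum>v<n. sc (\<eta> v) (ch [Suc v mod n] - ch [v]))"
  proof -
    have "path_bd {..<n} y = path_bd {..<n} (\<Sum>v<n. sc (\<eta> v) (ch [v, Suc v mod n]))"
      by (rule arg_cong[OF ydec])
    also have "\<dots> = (\<Sum>v<n. sc (\<eta> v) (ch [Suc v mod n] - ch [v]))"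
      unfolding path_bd_sum path_bd_sc
    proof (intro sum.cong refl)
      fix v assume "v \<in> {..<n}"
      then have "set [v, Suc v mod n] \<subseteq> {..<n}" using n2 by auto
      then show "sc (\<eta> v) (path_bd {..<n} (ch [v, Suc v mod n])) = sc (\<eta> v) (ch [Suc v mod n] - ch [v])"
        by (simp add: path_bd_ch bdE_two)
    qed
    finally show ?thesis .
  qed
  have step: "\<eta> (Suc w) = \<eta> w" if w: "Suc w < n" for w
  proof -
    have "0 = path_bd {..<n} y [Suc w]" using cyc by simp
    also have "\<dots> = (\<Sum>v<n. \<eta> v * ch [Suc v mod n] [Suc w]) - (\<Sum>v<n. \<eta> v * ch [v] [Suc w])"
      unfolding bdy sum_fun_apply by (simp add: right_diff_distrib sum_subtractf)
    also have "(\<Sum>v<n. \<eta> v * ch [Suc v mod n] [Suc w]) = (\<Sum>v<n. if v = w then \<eta> v else 0)"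
    proof (intro sum.cong refl)
      fix v assume v: "v \<in> {..<n}"
      have "(Suc v mod n = Suc w) = (v = w)"
      proof
        assume h: "Suc v mod n = Suc w"
        show "v = w"
        proof (cases "Suc v < n")
          case True then show ?thesis using h by simp
        next
          case False then have "Suc v = n" using v by simp
          then show ?thesis using h by simp
        qed
      next
        assume "v = w" then show "Suc v mod n = Suc w" using w by simp
      qed
      note iff = this
      show "\<eta> v * ch [Suc v mod n] [Suc w] = (if v = w then \<eta> v else 0)"
      proof (cases "v = w")
        case True then show ?thesis using w by (simp add: ch_def)
      next
        case False
        then have "Suc w \<noteq> Suc v mod n" using iff by simp
        then show ?thesis using False by (simp add: ch_def)
      qed
    qed
    also have "\<dots> = \<eta> w" using w by simp
    also have "(\<Sum>v<n. \<eta> v * ch [v] [Suc w]) = (\<Sum>v<n. if v = Suc w then \<eta> v else 0)"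
      by (intro sum.cong refl) (auto simp: ch_def)
    also have "\<dots> = \<eta> (Suc w)" using w by simp
    finally show ?thesis by simp
  qed
  have const: "\<eta> v = \<eta> 0" if "v < n" for v
    using that
  proof (induction v)
    case 0 then show ?case by simp
  next
    case (Suc v)
    then have "\<eta> v = \<eta> 0" by simp
    moreover have "\<eta> (Suc v) = \<eta> v" using step Suc.prems by blast
    ultimately show ?case by simp
  qed
  have "y = (\<Sum>v<n. sc (\<eta> 0) (ch [v, Suc v mod n]))"
    unfolding ydec
  proof (intro sum.cong refl)
    fix v assume "v \<in> {..<n}"
    then have "\<eta> v = \<eta> 0" by (intro const) simp
    then show "sc (\<eta> v) (ch [v, Suc v mod n]) = sc (\<eta> 0) (ch [v, Suc v mod n])" by simp
  qed
  also have "\<dots> = sc (\<eta> 0) (Qs n 0 n [])"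
    unfolding sc_sum Qs_def by (intro sum.cong refl) simp
  also have "\<dots> = sc (y [0, Suc 0 mod n]) (Qs n 0 n [])" by (simp only: \<eta>_def)
  finally show ?thesis .
qed

lemma H1:
  assumes "2 * d < n" "1 \<le> d"
  shows "path_homology_is_K TYPE('k::field_char_0) {..<n} (circulant_arrow n {1..d}) 1"
proof -
  let ?R = "circulant_arrow n {1..d}"
  have n2: "2 \<le> n" and dn: "d < n" using assms by auto
  define z :: "nat list \<Rightarrow> 'k" where "z = Qs n 0 n []"
  have zA: "z \<in> A_space TYPE('k) {..<n} ?R 1" unfolding z_def by (rule Qs_A[OF assms(2) dn n2])
  have zb: "path_bd {..<n} z = 0" unfolding z_def using n2 by (simp add: path_bd_Qs)
  have zc: "z \<in> path_cycles TYPE('k) {..<n} ?R 1"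
    unfolding path_cycles_def Omega_space_def using zA zb A_zero by (simp add: zero_fun_def)
  have nb: "z \<notin> path_boundaries TYPE('k) {..<n} ?R 1"
  proof
    assume "z \<in> path_boundaries TYPE('k) {..<n} ?R 1"
    then obtain b where b: "b \<in> Omega_space TYPE('k) {..<n} ?R 2" "z = path_bd {..<n} b"
      unfolding path_boundaries_def by (auto simp: numeral_2_eq_2)
    have bA: "b \<in> A_space TYPE('k) {..<n} ?R (Suc 1)" using b(1) by (simp add: Omega_space_def numeral_2_eq_2)
    define g :: "nat list \<Rightarrow> 'k" where "g w = of_nat (gap n (hd w) (hd (tl w)))" for w
    have "lin {..<n} (Suc 1) g (path_bd {..<n} b) = 0"
    proof (rule lin_bd_zero[OF bA])
      fix \<sigma> assume al: "\<sigma> \<in> allowed_paths {..<n} ?R (Suc 1)"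
      then obtain x y e where \<sigma>: "\<sigma> = [x, y, e]"
        by (auto simp: allowed_paths_def length_Suc_conv numeral_2_eq_2)
      have V: "x < n" "y < n" "e < n" using al \<sigma> by (auto simp: allowed_paths_def)
      have a1: "?R x y" and a2: "?R y e" using al unfolding \<sigma> One_nat_def allowed_Cons2 by auto
      have g1: "gap n x y \<le> d" "1 \<le> gap n x y" using arrow_gap[OF dn V(1,2) a1] by auto
      have g2: "gap n y e \<le> d" "1 \<le> gap n y e" using arrow_gap[OF dn V(2,3) a2] by auto
      have gxe: "gap n x e = gap n x y + gap n y e" using gap_add[OF V] g1 g2 assms(1) by simp
      have xy: "x \<noteq> y" "y \<noteq> e" using g1 g2 by auto
      have xe: "x \<noteq> e" using gxe g1 by auto
      have "bdE \<sigma> = (ch [y, e] - ch [x, e] + ch [x, y] :: nat list \<Rightarrow> 'k)"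
        using xy xe by (simp add: \<sigma> bdE_Cons2 E_ch)
      then show "lin {..<n} (Suc 1) g (bdE \<sigma>) = 0"
        using V by (simp add: lin_add lin_diff lin_ch LL_def g_def gxe)
    qed
    moreover have "lin {..<n} (Suc 1) g z = of_nat n"
    proof -
      have "lin {..<n} (Suc 1) g z = (\<Sum>k<n. lin {..<n} (Suc 1) g (ch [k mod n, Suc k mod n]))"
        unfolding z_def Qs_def lin_sum by simp
      also have "\<dots> = (\<Sum>k<n. (1::'k))"
      proof (intro sum.cong refl)
        fix k assume k: "k \<in> {..<n}"
        then have "gap n k (Suc k mod n) = 1" using gap_one[OF n2] by simp
        then show "lin {..<n} (Suc 1) g (ch [k mod n, Suc k mod n]) = 1"
          using k n2 by (simp add: lin_ch LL_def g_def)
      qed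
      finally show ?thesis by simp
    qed
    moreover have "(of_nat n :: 'k) \<noteq> 0" using n2 by simp
    ultimately show False using b(2) by simp
  qed
  have every: "\<exists>a. (\<lambda>w. z' w - a * z w) \<in> path_boundaries TYPE('k) {..<n} ?R 1"
    if z': "z' \<in> path_cycles TYPE('k) {..<n} ?R 1" for z'
  proof -
    have z'A: "z' \<in> A_space TYPE('k) {..<n} ?R 1" and z'b: "path_bd {..<n} z' = 0"
      using z' by (auto simp: path_cycles_def Omega_space_def zero_fun_def)
    define S where "S = LL {..<n} 2"
    define y where "y = (\<Sum>\<sigma>\<in>S. sc (z' \<sigma>) (U n \<sigma>))"
    have h: "path_bd {..<n} (Hop n z') + Hop n (path_bd {..<n} z') = z' - y"
      unfolding y_def S_def by (rule hom1[OF assms z'A])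
    then have pH: "path_bd {..<n} (Hop n z') = z' - y" using z'b by (simp add: Hop_zero)
    have Uform: "\<exists>a b. \<sigma> = [a, b] \<and> a < n \<and> b < n \<and> a \<noteq> b" if "\<sigma> \<in> S" "z' \<sigma> \<noteq> 0" for \<sigma>
    proof -
      have al: "\<sigma> \<in> allowed_paths {..<n} ?R 1" using z'A that by (auto simp: A_space_def)
      then obtain a b where \<sigma>: "\<sigma> = [a, b]" by (auto simp: allowed_paths_def length_Suc_conv)
      have V: "a < n" "b < n" using al \<sigma> by (auto simp: allowed_paths_def)
      have "?R a b" using al unfolding \<sigma> One_nat_def allowed_Cons2 by auto
      then have "a \<noteq> b" using arrow_gap[OF dn V] by auto
      then show ?thesis using \<sigma> V by auto
    qed
    have supp: "\<exists>v<n. w = [v, Suc v mod n]" if "y w \<noteq> 0" for w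
    proof -
      obtain \<sigma> where \<sigma>: "\<sigma> \<in> S" "z' \<sigma> * U n \<sigma> w \<noteq> 0"
        using \<open>y w \<noteq> 0\<close> unfolding y_def sum_fun_apply sc_apply by (meson sum.neutral)
      then obtain a b where ab: "\<sigma> = [a, b]" "a < n" using Uform by fastforce
      then have "Qs n a (gap n a b) [] w \<noteq> (0::'k)" using \<sigma> by auto
      then obtain k where "w = [(a+k) mod n, (a + Suc k) mod n]" using Qs_nz by blast
      moreover have "(a + Suc k) mod n = Suc ((a+k) mod n) mod n" by (simp add: mod_Suc_eq)
      ultimately show ?thesis using n2 by auto
    qed
    have yA: "y \<in> A_space TYPE('k) {..<n} ?R 1"
      unfolding A_space_def
    proof (intro CollectI allI impI)
      fix w assume "y w \<noteq> 0"
      then obtain v where "v < n" "w = [v, Suc v mod n]" using supp by blast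
      then show "w \<in> allowed_paths {..<n} ?R 1"
        using unit_arrow[OF assms(2) dn n2, of v 0] n2
        by (simp add: allowed_Cons2[of _ _ _ _ _ 0, simplified] allowed_single)
    qed
    have fS: "finite S" unfolding S_def by (rule finite_LL) simp
    have ycyc: "path_bd {..<n} y = 0"
    proof -
      have "path_bd {..<n} y = (\<Sum>\<sigma>\<in>S. sc (z' \<sigma>) (bdE \<sigma>))"
        unfolding y_def path_bd_sum path_bd_sc
      proof (intro sum.cong refl)
        fix \<sigma> assume "\<sigma> \<in> S"
        show "sc (z' \<sigma>) (path_bd {..<n} (U n \<sigma>)) = sc (z' \<sigma>) (bdE \<sigma>)"
        proof (cases "z' \<sigma> = 0")
          case True then show ?thesis by simp
        next
          case False
          then obtain a b where ab: "\<sigma> = [a, b]" "a < n" "b < n" using Uform \<open>\<sigma> \<in> S\<close> by blast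
          have "path_bd {..<n} (U n \<sigma>) = (ch [(a + gap n a b) mod n] - ch [a mod n] :: nat list \<Rightarrow> 'k)"
            using ab n2 by (simp add: path_bd_Qs)
          also have "\<dots> = bdE \<sigma>" using ab gap_eq[OF ab(2), of b] by (simp add: bdE_two)
          finally show ?thesis by simp
        qed
      qed
      also have "\<dots> = path_bd {..<n} z'"
        using bd_dec[OF z'A] by (simp add: S_def numeral_2_eq_2)
      finally show ?thesis using z'b by simp
    qed
    have yz: "y = sc (y [0, Suc 0 mod n]) z"
      unfolding z_def by (rule unit_cycle[OF n2 supp ycyc])
    have HA: "Hop n z' \<in> A_space TYPE('k) {..<n} ?R 2"
      using Hop_A[OF assms, of z' "TYPE('k)" 0] z'A by (simp add: numeral_2_eq_2)
    have "path_bd {..<n} (Hop n z') \<in> A_space TYPE('k) {..<n} ?R 1"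
      unfolding pH by (rule A_diff[OF z'A yA])
    then have "Hop n z' \<in> Omega_space TYPE('k) {..<n} ?R 2" using HA by (simp add: Omega_space_def)
    moreover have "(\<lambda>w. z' w - y [0, Suc 0 mod n] * z w) = path_bd {..<n} (Hop n z')"
      unfolding pH by (subst (2) yz) (simp add: fun_eq_iff)
    ultimately show ?thesis unfolding path_boundaries_def by (auto simp: numeral_2_eq_2)
  qed
  show ?thesis unfolding path_homology_is_K_def using zc nb every by blast
qed

theorem mainTheorem9:
  fixes n d :: nat
  assumes "2 < d" and "2 * d < n"
  shows "path_homology_is_K TYPE('k::field_char_0) {..<n} (circulant_arrow n {1..d}) 0
       \<and> path_homology_is_K TYPE('k) {..<n} (circulant_arrow n {1..d}) 1
       \<and> (\<forall>m\<ge>2. path_homology_is_zero TYPE('k) {..<n} (circulant_arrow n {1..d}) m)"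
proof (intro conjI allI impI)
  have d1: "1 \<le> d" using assms by simp
  show "path_homology_is_K TYPE('k::field_char_0) {..<n} (circulant_arrow n {1..d}) 0"
    by (rule H0[OF assms(2) d1])
  show "path_homology_is_K TYPE('k) {..<n} (circulant_arrow n {1..d}) 1"
    by (rule H1[OF assms(2) d1])
  fix m :: nat assume "2 \<le> m"
  show "path_homology_is_zero TYPE('k) {..<n} (circulant_arrow n {1..d}) m"
    unfolding path_homology_is_zero_def using Hm_zero[OF assms(2) d1 \<open>2 \<le> m\<close>] by blast
qed


end
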